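(* Let $\Phi_U$ be a pmf on a countable $\mathcal U$, $\Phi_{V|U}$ a channel to a countable $\mathcal V$, and $Q_V=\Phi_V=\sum_u\Phi_U\Phi_{V|U}$. Let $u(1),\dots,u(M)$ be drawn independently from $\Phi_U$ and let $P_V(v)=\frac1M\sum_{j=1}^M\Phi_{V|U}(v|u(j))$. Then for every $\tau$, $$\mathbf E\|P_V-Q_V\|_{TV}\le\mathbf P_\Phi(\mathcal A'^c_\tau)+\delta'_\Phi(\tau),$$ where $\mathcal A'_\tau=\{(u,v):i_\Phi(u;v)\le\tau\}$ and $$\delta'_\Phi(\tau)=\frac{1}{2\sqrt M}\mathbf E_{\Phi_V}\sqrt{\mathbf E_{\Phi_{U|V}}\,2^{\,i_\Phi(U;V)}\mathbf 1_{\mathcal A'_\tau}(U,V)}\le\frac12\sqrt{\frac{2^\tau}{M}}.$$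
   Context: Expectation on the left is over the random codebook. $i_\Phi(u;v)=\log\frac{\Phi_{U,V}(u,v)}{\Phi_U(u)\Phi_V(v)}$, base-2 logarithm. Total variation is half the $\ell_1$ distance. *)

theory Defs
  imports "HOL-Probability.Probability"
begin

definition out_pmf :: "'u pmf \<Rightarrow> ('u \<Rightarrow> 'v pmf) \<Rightarrow> 'v pmf" where
  "out_pmf PU W = bind_pmf PU W"

definition joint_pmf :: "'u pmf \<Rightarrow> ('u \<Rightarrow> 'v pmf) \<Rightarrow> ('u \<times> 'v) pmf" where
  "joint_pmf PU W = bind_pmf PU (\<lambda>u. map_pmf (\<lambda>v. (u, v)) (W u))"

definition info_dens :: "'u pmf \<Rightarrow> ('u \<Rightarrow> 'v pmf) \<Rightarrow> 'u \<Rightarrow> 'v \<Rightarrow> real" where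
  "info_dens PU W u v =
     log 2 (pmf (joint_pmf PU W) (u, v) / (pmf PU u * pmf (out_pmf PU W) v))"

definition tv_dist :: "('v \<Rightarrow> real) \<Rightarrow> ('v \<Rightarrow> real) \<Rightarrow> real" where
  "tv_dist p q = (1/2) * (\<Sum>\<^sub>\<infinity> v. \<bar>p v - q v\<bar>)"

definition A_tau :: "'u pmf \<Rightarrow> ('u \<Rightarrow> 'v pmf) \<Rightarrow> real \<Rightarrow> ('u \<times> 'v) set" where
  "A_tau PU W \<tau> = {(u, v). info_dens PU W u v \<le> \<tau>}"

definition cond_term :: "'u pmf \<Rightarrow> ('u \<Rightarrow> 'v pmf) \<Rightarrow> real \<Rightarrow> 'v \<Rightarrow> real" where
  "cond_term PU W \<tau> v =
     (\<Sum>\<^sub>\<infinity> u. (pmf (joint_pmf PU W) (u, v) / pmf (out_pmf PU W) v)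
        * 2 powr (info_dens PU W u v) * indicator (A_tau PU W \<tau>) (u, v))"

definition delta' :: "'u pmf \<Rightarrow> ('u \<Rightarrow> 'v pmf) \<Rightarrow> nat \<Rightarrow> real \<Rightarrow> real" where
  "delta' PU W M \<tau> =
     1 / (2 * sqrt (real M)) *
       measure_pmf.expectation (out_pmf PU W) (\<lambda>v. sqrt (cond_term PU W \<tau> v))"

definition codebook_pmf :: "'u pmf \<Rightarrow> nat \<Rightarrow> (nat \<Rightarrow> 'u) pmf" where
  "codebook_pmf PU M = Pi_pmf {..<M} undefined (\<lambda>_. PU)"

definition induced_out :: "('u \<Rightarrow> 'v pmf) \<Rightarrow> nat \<Rightarrow> (nat \<Rightarrow> 'u) \<Rightarrow> 'v \<Rightarrow> real" where
  "induced_out W M c v = (1 / real M) * (\<Sum>j<M. pmf (W (c j)) v)"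

end

theory Submission
  imports Defs
begin

lemma bint: fixes f :: "'a \<Rightarrow> real"
  assumes "\<And>x. \<bar>f x\<bar> \<le> B" shows "integrable (measure_pmf p) f"
  by (rule measure_pmf.integrable_const_bound[where B=B]) (auto simp: assms)

lemma infsum_nn_conv:
  fixes f :: "'a \<Rightarrow> real"
  assumes "\<And>x. f x \<ge> 0"
  shows "infsum f UNIV = enn2real (\<integral>\<^sup>+x. ennreal (f x) \<partial>count_space UNIV)"
proof (cases "Infinite_Set_Sum.abs_summable_on f UNIV")
  case True
  have "infsum f UNIV = infsetsum f UNIV" using infsetsum_infsum[OF True] by simp
  also have "\<dots> = enn2real (\<integral>\<^sup>+x. ennreal (f x) \<partial>count_space UNIV)"
    using True assms unfolding abs_summable_on_def
    by (subst infsetsum_conv_nn_integral) (auto simp: integrable_iff_bounded)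
  finally show ?thesis .
next
  case False
  have ns: "\<not> f summable_on UNIV"
    using False abs_summable_equivalent[of f UNIV] assms by simp
  hence "infsum f UNIV = 0" by (simp add: infsum_def)
  moreover have "(\<integral>\<^sup>+x. ennreal (f x) \<partial>count_space UNIV) = \<infinity>"
  proof (rule ccontr)
    assume "(\<integral>\<^sup>+x. ennreal (f x) \<partial>count_space UNIV) \<noteq> \<infinity>"
    hence "integrable (count_space UNIV) f"
      using assms by (intro integrableI_bounded) (auto simp: top.not_eq_extremum)
    thus False using False unfolding abs_summable_on_def by simp
  qed
  ultimately show ?thesis by simp
qed

lemma exp_nn_conv:
  fixes f :: "'a \<Rightarrow> real"
  assumes "\<And>x. f x \<ge> 0"
  shows "measure_pmf.expectation p f = enn2real (\<integral>\<^sup>+x. ennreal (pmf p x * f x) \<partial>count_space UNIV)"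
  using assms
  by (subst integral_eq_nn_integral) (auto simp: nn_integral_measure_pmf ennreal_mult)

lemma pmf_joint: "pmf (joint_pmf PU W) (u, v) = pmf PU u * pmf (W u) v"
proof -
  have "pmf (joint_pmf PU W) (u, v) = (\<integral>x. pmf (map_pmf (\<lambda>v. (x, v)) (W x)) (u, v) \<partial>measure_pmf PU)"
    unfolding joint_pmf_def by (rule pmf_bind)
  also have "\<dots> = (\<integral>x. indicator {u} x * pmf (W u) v \<partial>measure_pmf PU)"
  proof (rule Bochner_Integration.integral_cong[OF refl])
    fix x show "pmf (map_pmf (\<lambda>v. (x, v)) (W x)) (u, v) = indicator {u} x * pmf (W u) v"
    proof (cases "x = u")
      case True thus ?thesis using pmf_map_inj'[of "\<lambda>v. (u, v)" "W u" v] by (simp add: inj_def)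
    next
      case False thus ?thesis by (auto simp: pmf_eq_0_set_pmf)
    qed
  qed
  also have "\<dots> = pmf PU u * pmf (W u) v"
    by (subst integral_measure_pmf_real[where A="{u}"]) (auto simp: indicator_def split: if_splits)
  finally show ?thesis .
qed

lemma E_abs_le_sqrt:
  fixes X :: "'a \<Rightarrow> real"
  assumes B: "\<And>x. \<bar>X x\<bar> \<le> B"
  shows "measure_pmf.expectation p (\<lambda>x. \<bar>X x\<bar>) \<le> sqrt (measure_pmf.expectation p (\<lambda>x. (X x)^2))"
proof -
  define m where "m = measure_pmf.expectation p (\<lambda>x. \<bar>X x\<bar>)"
  have m0: "m \<ge> 0" unfolding m_def by (rule Bochner_Integration.integral_nonneg) auto
  have iX: "integrable (measure_pmf p) (\<lambda>x. \<bar>X x\<bar>)" by (rule bint[where B=B]) (use B in auto)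
  have iX2: "integrable (measure_pmf p) (\<lambda>x. (X x)^2)"
  proof (rule bint[where B="B^2"])
    fix x have "\<bar>X x\<bar>^2 \<le> B^2" using B[of x] by (intro power_mono) auto
    thus "\<bar>(X x)^2\<bar> \<le> B^2" by simp
  qed
  have "0 \<le> measure_pmf.expectation p (\<lambda>x. (\<bar>X x\<bar> - m)^2)"
    by (rule Bochner_Integration.integral_nonneg) auto
  also have "(\<lambda>x. (\<bar>X x\<bar> - m)^2) = (\<lambda>x. ((X x)^2 - (2*m) * \<bar>X x\<bar>) + m^2)"
    by (auto simp: power2_eq_square algebra_simps)
  also have "measure_pmf.expectation p \<dots> = measure_pmf.expectation p (\<lambda>x. (X x)^2) - 2*m*m + m^2"
    using iX iX2 by (simp add: Bochner_Integration.integral_add Bochner_Integration.integral_diff m_def)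
  finally have "m^2 \<le> measure_pmf.expectation p (\<lambda>x. (X x)^2)" by (simp add: power2_eq_square)
  hence "sqrt (m^2) \<le> sqrt (measure_pmf.expectation p (\<lambda>x. (X x)^2))" by (rule real_sqrt_le_mono)
  thus ?thesis using m0 by (simp add: m_def)
qed

lemma exp_slice:
  assumes "j < (M::nat)"
  shows "measure_pmf.expectation (Pi_pmf {..<M} d (\<lambda>_. PU)) (\<lambda>c. f (c j)) = measure_pmf.expectation PU (f :: _ \<Rightarrow> real)"
proof -
  have "measure_pmf.expectation (Pi_pmf {..<M} d (\<lambda>_. PU)) (\<lambda>c. f (c j))
      = measure_pmf.expectation (map_pmf (\<lambda>c. c j) (Pi_pmf {..<M} d (\<lambda>_. PU))) f" by simp
  also have "map_pmf (\<lambda>c. c j) (Pi_pmf {..<M} d (\<lambda>_. PU)) = PU"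
    using assms by (subst Pi_pmf_component) auto
  finally show ?thesis .
qed

lemma exp_pair:
  fixes f :: "_ \<Rightarrow> real"
  assumes "i < (M::nat)" "j < M" "i \<noteq> j" and f: "\<And>x. 0 \<le> f x" "\<And>x. f x \<le> B"
  shows "measure_pmf.expectation (Pi_pmf {..<M} d (\<lambda>_. PU)) (\<lambda>c. f (c i) * f (c j))
         = (measure_pmf.expectation PU f)^2"
proof -
  define g where "g = (\<lambda>k. if k = i \<or> k = j then f else (\<lambda>_. 1::real))"
  have pr: "(\<Prod>k\<in>{..<M}. g k (c k)) = f (c i) * f (c j)" for c
  proof -
    have "(\<Prod>k\<in>{..<M}. g k (c k)) = g i (c i) * (\<Prod>k\<in>{..<M}-{i}. g k (c k))"
      using assms by (subst prod.remove[of _ i]) auto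
    also have "(\<Prod>k\<in>{..<M}-{i}. g k (c k)) = g j (c j) * (\<Prod>k\<in>{..<M}-{i}-{j}. g k (c k))"
      using assms by (subst prod.remove[of _ j]) auto
    also have "(\<Prod>k\<in>{..<M}-{i}-{j}. g k (c k)) = 1"
      by (rule prod.neutral) (auto simp: g_def)
    finally show ?thesis by (simp add: g_def)
  qed
  have "measure_pmf.expectation (Pi_pmf {..<M} d (\<lambda>_. PU)) (\<lambda>c. \<Prod>k\<in>{..<M}. g k (c k))
     = (\<Prod>k\<in>{..<M}. measure_pmf.expectation PU (g k))"
  proof (rule expectation_prod_Pi_pmf)
    fix k show "integrable (measure_pmf PU) (g k)"
      unfolding g_def using f by (auto intro!: bint[where B="max B 1"] simp: abs_of_nonneg le_max_iff_disj)
  qed (auto simp: g_def f)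
  also have "\<dots> = (\<Prod>k\<in>{..<M}. (if k = i \<or> k = j then measure_pmf.expectation PU f else 1))"
    by (rule prod.cong) (auto simp: g_def)
  also have "\<dots> = (measure_pmf.expectation PU f)^2"
  proof -
    have "{..<M} \<inter> {x. x = i \<or> x = j} = {i, j}" using assms by auto
    thus ?thesis using assms by (subst prod.If_cases) (auto simp: power2_eq_square)
  qed
  finally show ?thesis using pr by simp
qed

lemma var_bound:
  fixes a :: "'u \<Rightarrow> real" and M :: nat
  assumes M: "M \<ge> 1" and a0: "\<And>u. 0 \<le> a u" and a1: "\<And>u. a u \<le> 1"
  shows "measure_pmf.expectation (Pi_pmf {..<M} d (\<lambda>_. PU))
            (\<lambda>c. ((1/M) * (\<Sum>j<M. a (c j)) - measure_pmf.expectation PU a)^2)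
         \<le> measure_pmf.expectation PU (\<lambda>u. (a u)^2) / M"
proof -
  define C where "C = Pi_pmf {..<M} d (\<lambda>_. PU)"
  define \<mu> where "\<mu> = measure_pmf.expectation PU a"
  define s where "s = measure_pmf.expectation PU (\<lambda>u. (a u)^2)"
  define P where "P = (\<lambda>c. (1/M) * (\<Sum>j<M. a (c j)))"
  have Mpos: "real M > 0" using M by simp
  have P01: "0 \<le> P c \<and> P c \<le> 1" for c
  proof -
    have "(\<Sum>j<M. a (c j)) \<le> (\<Sum>j<M. 1)" by (rule sum_mono) (rule a1)
    moreover have "0 \<le> (\<Sum>j<M. a (c j))" by (rule sum_nonneg) (rule a0)
    ultimately show ?thesis using Mpos unfolding P_def by (auto simp: field_simps)
  qed
  have ia: "integrable (measure_pmf C) (\<lambda>c. a (c j))" for j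
    by (rule bint[where B=1]) (use a0 a1 in \<open>auto simp: abs_of_nonneg\<close>)
  have iaa: "integrable (measure_pmf C) (\<lambda>c. a (c i) * a (c j))" for i j
  proof (rule bint[where B=1])
    fix c have "a (c i) * a (c j) \<le> 1 * 1" using a0 a1 by (intro mult_mono) auto
    thus "\<bar>a (c i) * a (c j)\<bar> \<le> 1" using a0 by (simp add: abs_of_nonneg)
  qed
  have iP: "integrable (measure_pmf C) P" by (rule bint[where B=1]) (use P01 in \<open>auto simp: abs_of_nonneg\<close>)
  have iP2: "integrable (measure_pmf C) (\<lambda>c. (P c)^2)"
  proof (rule bint[where B=1])
    fix c have "(P c)^2 \<le> 1^2" using P01[of c] by (intro power_mono) auto
    thus "\<bar>(P c)^2\<bar> \<le> 1" by simp
  qed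
  have EP: "measure_pmf.expectation C P = \<mu>"
  proof -
    have "measure_pmf.expectation C P = (1/M) * (\<Sum>j<M. measure_pmf.expectation C (\<lambda>c. a (c j)))"
      unfolding P_def by (simp add: Bochner_Integration.integral_sum ia)
    also have "\<dots> = (1/M) * (\<Sum>j<M. \<mu>)"
      unfolding C_def \<mu>_def by (simp add: exp_slice)
    finally show ?thesis using Mpos by simp
  qed
  have EP2: "measure_pmf.expectation C (\<lambda>c. (P c)^2) = (s + (M - 1) * \<mu>^2) / M"
  proof -
    have eq: "(P c)^2 = (1/M)^2 * (\<Sum>i<M. \<Sum>j<M. a (c i) * a (c j))" for c
      unfolding P_def by (simp add: power2_eq_square sum_product)
    have "measure_pmf.expectation C (\<lambda>c. (P c)^2)
        = (1/M)^2 * (\<Sum>i<M. \<Sum>j<M. measure_pmf.expectation C (\<lambda>c. a (c i) * a (c j)))"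
      unfolding eq by (simp add: Bochner_Integration.integral_sum iaa integrable_sum)
    also have "\<dots> = (1/M)^2 * (\<Sum>i<M. s + (M - 1) * \<mu>^2)"
    proof -
      have "(\<Sum>j<M. measure_pmf.expectation C (\<lambda>c. a (c i) * a (c j))) = s + (M - 1) * \<mu>^2"
        if i: "i < M" for i
      proof -
        have "(\<Sum>j<M. measure_pmf.expectation C (\<lambda>c. a (c i) * a (c j)))
           = measure_pmf.expectation C (\<lambda>c. a (c i) * a (c i))
             + (\<Sum>j\<in>{..<M}-{i}. measure_pmf.expectation C (\<lambda>c. a (c i) * a (c j)))"
          using i by (subst sum.remove[of _ i]) auto
        also have "measure_pmf.expectation C (\<lambda>c. a (c i) * a (c i)) = s"
          unfolding C_def s_def using exp_slice[OF i, of d PU "\<lambda>u. a u * a u"]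
          by (simp add: power2_eq_square)
        also have "(\<Sum>j\<in>{..<M}-{i}. measure_pmf.expectation C (\<lambda>c. a (c i) * a (c j)))
             = (\<Sum>j\<in>{..<M}-{i}. \<mu>^2)"
          unfolding C_def \<mu>_def by (rule sum.cong) (auto intro!: exp_pair[where B=1] a0 a1 i)
        also have "\<dots> = (M - 1) * \<mu>^2" using i by simp
        finally show ?thesis .
      qed
      thus ?thesis by (intro arg_cong[where f="\<lambda>x. (1/M)^2 * x"] sum.cong) auto
    qed
    also have "\<dots> = (s + (M - 1) * \<mu>^2) / M" using Mpos by (simp add: power2_eq_square field_simps)
    finally show ?thesis .
  qed
  have "(\<lambda>c. (P c - \<mu>)^2) = (\<lambda>c. ((P c)^2 - (2*\<mu>) * P c) + \<mu>^2)"
    by (auto simp: power2_eq_square algebra_simps)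
  hence "measure_pmf.expectation C (\<lambda>c. (P c - \<mu>)^2) = (s + (M - 1) * \<mu>^2) / M - 2*\<mu>*\<mu> + \<mu>^2"
    using iP iP2 EP EP2 by (simp add: Bochner_Integration.integral_add Bochner_Integration.integral_diff)
  also have "\<dots> \<le> s / M"
  proof -
    have "(s + (M - 1) * \<mu>^2) / M - 2*\<mu>*\<mu> + \<mu>^2 = (s - \<mu>^2) / M"
      using Mpos M by (simp add: power2_eq_square field_simps of_nat_diff)
    also have "\<dots> \<le> s / M" using Mpos by (simp add: divide_right_mono)
    finally show ?thesis .
  qed
  finally show ?thesis unfolding C_def P_def \<mu>_def s_def .
qed

lemma core:
  fixes a b :: "'u \<Rightarrow> real" and M :: nat
  assumes M: "M \<ge> 1" and a0: "\<And>u. 0 \<le> a u" and a1: "\<And>u. a u \<le> 1"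
    and b0: "\<And>u. 0 \<le> b u" and b1: "\<And>u. b u \<le> 1"
  shows "measure_pmf.expectation (Pi_pmf {..<M} d (\<lambda>_. PU))
            (\<lambda>c. \<bar>(1/M) * (\<Sum>j<M. a (c j) + b (c j)) - (measure_pmf.expectation PU a + measure_pmf.expectation PU b)\<bar>)
         \<le> sqrt (measure_pmf.expectation PU (\<lambda>u. (a u)^2) / M) + 2 * measure_pmf.expectation PU b"
proof -
  define C where "C = Pi_pmf {..<M} d (\<lambda>_. PU)"
  define \<mu> where "\<mu> = measure_pmf.expectation PU a"
  define \<nu> where "\<nu> = measure_pmf.expectation PU b"
  define P where "P = (\<lambda>c. (1/M) * (\<Sum>j<M. a (c j)))"
  define Q where "Q = (\<lambda>c. (1/M) * (\<Sum>j<M. b (c j)))"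
  have Mpos: "real M > 0" using M by simp
  have P01: "0 \<le> P c \<and> P c \<le> 1" for c
  proof -
    have "(\<Sum>j<M. a (c j)) \<le> (\<Sum>j<M. 1)" by (rule sum_mono) (rule a1)
    moreover have "0 \<le> (\<Sum>j<M. a (c j))" by (rule sum_nonneg) (rule a0)
    ultimately show ?thesis using Mpos unfolding P_def by (auto simp: field_simps)
  qed
  have Q01: "0 \<le> Q c \<and> Q c \<le> 1" for c
  proof -
    have "(\<Sum>j<M. b (c j)) \<le> (\<Sum>j<M. 1)" by (rule sum_mono) (rule b1)
    moreover have "0 \<le> (\<Sum>j<M. b (c j))" by (rule sum_nonneg) (rule b0)
    ultimately show ?thesis using Mpos unfolding Q_def by (auto simp: field_simps)
  qed
  have \<mu>01: "0 \<le> \<mu> \<and> \<mu> \<le> 1" unfolding \<mu>_def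
    using a0 a1 by (auto intro!: Bochner_Integration.integral_nonneg measure_pmf.integral_le_const bint[where B=1] simp: abs_of_nonneg)
  have \<nu>0: "0 \<le> \<nu>" unfolding \<nu>_def using b0 by (auto intro!: Bochner_Integration.integral_nonneg)
  have ib: "integrable (measure_pmf C) (\<lambda>c. b (c j))" for j
    by (rule bint[where B=1]) (use b0 b1 in \<open>auto simp: abs_of_nonneg\<close>)
  have iQ: "integrable (measure_pmf C) Q" by (rule bint[where B=1]) (use Q01 in \<open>auto simp: abs_of_nonneg\<close>)
  have iD: "integrable (measure_pmf C) (\<lambda>c. \<bar>P c - \<mu>\<bar>)"
    by (rule bint[where B=2]) (smt (verit) P01 \<mu>01)
  have EQ: "measure_pmf.expectation C Q = \<nu>"
  proof -
    have "measure_pmf.expectation C Q = (1/M) * (\<Sum>j<M. measure_pmf.expectation C (\<lambda>c. b (c j)))"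
      unfolding Q_def by (simp add: Bochner_Integration.integral_sum ib)
    also have "\<dots> = (1/M) * (\<Sum>j<M. \<nu>)"
      unfolding C_def \<nu>_def by (simp add: exp_slice)
    finally show ?thesis using Mpos by simp
  qed
  have pw: "\<bar>(1/M) * (\<Sum>j<M. a (c j) + b (c j)) - (\<mu> + \<nu>)\<bar> \<le> (\<bar>P c - \<mu>\<bar> + Q c) + \<nu>" for c
  proof -
    have "(1/M) * (\<Sum>j<M. a (c j) + b (c j)) = P c + Q c"
      unfolding P_def Q_def by (simp add: sum.distrib distrib_left)
    thus ?thesis using Q01[of c] \<nu>0 by (simp only:) linarith
  qed
  have "measure_pmf.expectation C (\<lambda>c. \<bar>(1/M) * (\<Sum>j<M. a (c j) + b (c j)) - (\<mu> + \<nu>)\<bar>)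
      \<le> measure_pmf.expectation C (\<lambda>c. (\<bar>P c - \<mu>\<bar> + Q c) + \<nu>)"
  proof (rule integral_mono)
    show "integrable (measure_pmf C) (\<lambda>c. \<bar>(1/M) * (\<Sum>j<M. a (c j) + b (c j)) - (\<mu> + \<nu>)\<bar>)"
    proof (rule bint[where B="3 + \<nu>"])
      fix c show "\<bar>\<bar>(1/M) * (\<Sum>j<M. a (c j) + b (c j)) - (\<mu> + \<nu>)\<bar>\<bar> \<le> 3 + \<nu>"
        using pw[of c] P01[of c] Q01[of c] \<mu>01 by (smt (verit))
    qed
  qed (use iD iQ pw in auto)
  also have "\<dots> = measure_pmf.expectation C (\<lambda>c. \<bar>P c - \<mu>\<bar>) + \<nu> + \<nu>"
    using iD iQ EQ by (simp add: Bochner_Integration.integral_add)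
  also have "measure_pmf.expectation C (\<lambda>c. \<bar>P c - \<mu>\<bar>) \<le> sqrt (measure_pmf.expectation C (\<lambda>c. (P c - \<mu>)^2))"
    by (rule E_abs_le_sqrt[where B=2]) (smt (verit) P01 \<mu>01)
  also have "measure_pmf.expectation C (\<lambda>c. (P c - \<mu>)^2) \<le> measure_pmf.expectation PU (\<lambda>u. (a u)^2) / M"
    unfolding C_def P_def \<mu>_def by (rule var_bound[OF M a0 a1])
  finally show ?thesis unfolding C_def \<mu>_def \<nu>_def by (simp add: real_sqrt_le_mono)
qed

lemma PV_pos:
  assumes "pmf PU u * pmf (W u) v \<noteq> 0"
  shows "pmf (out_pmf PU W) v > 0"
proof -
  have "u \<in> set_pmf PU" "v \<in> set_pmf (W u)" using assms by (auto simp: set_pmf_iff)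
  hence "v \<in> set_pmf (out_pmf PU W)" unfolding out_pmf_def by auto
  thus ?thesis by (simp add: pmf_positive)
qed

lemma F1:
  "pmf (out_pmf PU W) v = measure_pmf.expectation PU (\<lambda>u. pmf (W u) v * indicator A (u,v))
      + measure_pmf.expectation PU (\<lambda>u. pmf (W u) v * indicator (-A) (u,v))"
proof -
  have i1: "integrable (measure_pmf PU) (\<lambda>u. pmf (W u) v * indicator S (u,v))" for S
    by (rule bint[where B=1]) (auto simp: indicator_def pmf_le_1)
  have "pmf (out_pmf PU W) v = measure_pmf.expectation PU (\<lambda>u. pmf (W u) v * indicator A (u,v) + pmf (W u) v * indicator (-A) (u,v))"
    unfolding out_pmf_def pmf_bind by (intro Bochner_Integration.integral_cong) (auto simp: indicator_def)
  thus ?thesis using i1 by (simp add: Bochner_Integration.integral_add)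
qed

lemma F3:
  "measure_pmf.expectation PU (\<lambda>u. (pmf (W u) v * indicator (A_tau PU W \<tau>) (u,v))^2)
     = (pmf (out_pmf PU W) v)^2 * cond_term PU W \<tau> v"
proof -
  define PV where "PV = pmf (out_pmf PU W) v"
  define t where "t = (\<lambda>u. (pmf (joint_pmf PU W) (u, v) / pmf (out_pmf PU W) v)
        * 2 powr (info_dens PU W u v) * indicator (A_tau PU W \<tau>) (u, v))"
  have t0: "t u \<ge> 0" for u unfolding t_def by (auto simp: indicator_def)
  have key: "pmf PU u * (pmf (W u) v * indicator (A_tau PU W \<tau>) (u,v))^2 = PV^2 * t u" for u
  proof (cases "pmf PU u * pmf (W u) v = 0")
    case True
    thus ?thesis unfolding t_def PV_def by (auto simp: pmf_joint power2_eq_square)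
  next
    case False
    have pu: "pmf PU u > 0" and pw: "pmf (W u) v > 0" using False pmf_nonneg[of PU u] pmf_nonneg[of "W u" v]
      by (auto simp: less_le)
    have pv: "PV > 0" unfolding PV_def by (rule PV_pos[where W=W, OF False])
    have "2 powr (info_dens PU W u v) = pmf PU u * pmf (W u) v / (pmf PU u * PV)"
      unfolding info_dens_def pmf_joint PV_def[symmetric] using pu pw pv
      by (subst powr_log_cancel) auto
    hence "t u = (pmf PU u * pmf (W u) v / PV) * (pmf PU u * pmf (W u) v / (pmf PU u * PV)) * indicator (A_tau PU W \<tau>) (u, v)"
      unfolding t_def pmf_joint PV_def by simp
    thus ?thesis using pu pv by (auto simp: indicator_def power2_eq_square field_simps)
  qed
  have "measure_pmf.expectation PU (\<lambda>u. (pmf (W u) v * indicator (A_tau PU W \<tau>) (u,v))^2)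
      = enn2real (\<integral>\<^sup>+u. ennreal (pmf PU u * (pmf (W u) v * indicator (A_tau PU W \<tau>) (u,v))^2) \<partial>count_space UNIV)"
    by (rule exp_nn_conv) auto
  also have "\<dots> = enn2real (\<integral>\<^sup>+u. ennreal (PV^2) * ennreal (t u) \<partial>count_space UNIV)"
    using t0 by (simp add: key ennreal_mult)
  also have "\<dots> = enn2real (ennreal (PV^2) * (\<integral>\<^sup>+u. ennreal (t u) \<partial>count_space UNIV))"
    by (simp add: nn_integral_cmult)
  also have "\<dots> = PV^2 * enn2real (\<integral>\<^sup>+u. ennreal (t u) \<partial>count_space UNIV)"
    by (simp add: enn2real_mult)
  also have "enn2real (\<integral>\<^sup>+u. ennreal (t u) \<partial>count_space UNIV) = cond_term PU W \<tau> v"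
    unfolding cond_term_def t_def[symmetric] by (rule infsum_nn_conv[symmetric]) (rule t0)
  finally show ?thesis unfolding PV_def .
qed

lemma F4:
  fixes W :: "'u \<Rightarrow> 'v::countable pmf"
  shows "(\<integral>\<^sup>+v. ennreal (measure_pmf.expectation PU (\<lambda>u. pmf (W u) v * indicator (-A) (u,v))) \<partial>count_space UNIV)
       = emeasure (measure_pmf (joint_pmf PU W)) (-A)"
proof -
  have "(\<integral>\<^sup>+v. ennreal (measure_pmf.expectation PU (\<lambda>u. pmf (W u) v * indicator (-A) (u,v))) \<partial>count_space UNIV)
     = (\<integral>\<^sup>+v. \<integral>\<^sup>+u. ennreal (pmf (W u) v * indicator (-A) (u,v)) \<partial>PU \<partial>count_space UNIV)"
  proof (rule nn_integral_cong)
    fix v show "ennreal (measure_pmf.expectation PU (\<lambda>u. pmf (W u) v * indicator (-A) (u,v)))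
      = \<integral>\<^sup>+u. ennreal (pmf (W u) v * indicator (-A) (u,v)) \<partial>PU"
      by (rule nn_integral_eq_integral[symmetric]) (auto intro!: bint[where B=1] simp: indicator_def pmf_le_1)
  qed
  also have "\<dots> = (\<integral>\<^sup>+u. \<integral>\<^sup>+v. ennreal (pmf (W u) v * indicator (-A) (u,v)) \<partial>count_space UNIV \<partial>PU)"
    by (rule nn_integral_count_space_nn_integral[symmetric]) auto
  also have "\<dots> = (\<integral>\<^sup>+u. emeasure (measure_pmf (W u)) {v. (u,v) \<in> -A} \<partial>PU)"
  proof (rule nn_integral_cong)
    fix u
    have "(\<integral>\<^sup>+v. ennreal (pmf (W u) v * indicator (-A) (u,v)) \<partial>count_space UNIV)
        = (\<integral>\<^sup>+v. ennreal (pmf (W u) v) * indicator {v. (u,v) \<in> -A} v \<partial>count_space UNIV)"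
      by (intro nn_integral_cong) (auto simp: indicator_def)
    also have "\<dots> = (\<integral>\<^sup>+v. indicator {v. (u,v) \<in> -A} v \<partial>measure_pmf (W u))"
      by (simp add: nn_integral_measure_pmf)
    also have "\<dots> = emeasure (measure_pmf (W u)) {v. (u,v) \<in> -A}"
      by simp
    finally show "(\<integral>\<^sup>+v. ennreal (pmf (W u) v * indicator (-A) (u,v)) \<partial>count_space UNIV)
        = emeasure (measure_pmf (W u)) {v. (u,v) \<in> -A}" .
  qed
  also have "\<dots> = emeasure (measure_pmf (joint_pmf PU W)) (-A)"
    unfolding joint_pmf_def by (simp add: vimage_def)
  finally show ?thesis .
qed

lemma F5: "0 \<le> cond_term PU W \<tau> v \<and> cond_term PU W \<tau> v \<le> 2 powr \<tau>"
proof -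
  define PV where "PV = pmf (out_pmf PU W) v"
  define t where "t = (\<lambda>u. (pmf (joint_pmf PU W) (u, v) / pmf (out_pmf PU W) v)
        * 2 powr (info_dens PU W u v) * indicator (A_tau PU W \<tau>) (u, v))"
  have t0: "t u \<ge> 0" for u unfolding t_def by (auto simp: indicator_def)
  have ct: "cond_term PU W \<tau> v = enn2real (\<integral>\<^sup>+u. ennreal (t u) \<partial>count_space UNIV)"
    unfolding cond_term_def t_def[symmetric] by (rule infsum_nn_conv) (rule t0)
  have "cond_term PU W \<tau> v \<le> 2 powr \<tau>"
  proof (cases "PV = 0")
    case True
    hence "t u = 0" for u unfolding t_def PV_def by simp
    thus ?thesis using ct by simp
  next
    case False
    hence pv: "PV > 0" unfolding PV_def using pmf_nonneg[of "out_pmf PU W" v] by simp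
    have tb: "t u \<le> (2 powr \<tau> / PV) * (pmf PU u * pmf (W u) v)" for u
    proof (cases "pmf PU u * pmf (W u) v = 0 \<or> (u, v) \<notin> A_tau PU W \<tau>")
      case True thus ?thesis unfolding t_def using pv by (auto simp: pmf_joint indicator_def)
    next
      case False
      hence inA: "info_dens PU W u v \<le> \<tau>" by (auto simp: A_tau_def)
      have "2 powr (info_dens PU W u v) \<le> 2 powr \<tau>" using inA by simp
      hence "(pmf PU u * pmf (W u) v / PV) * 2 powr (info_dens PU W u v) \<le> (pmf PU u * pmf (W u) v / PV) * 2 powr \<tau>"
        using pv by (intro mult_left_mono) auto
      thus ?thesis using False unfolding t_def pmf_joint PV_def[symmetric] by (simp add: field_simps)
    qed
    have "(\<integral>\<^sup>+u. ennreal (t u) \<partial>count_space UNIV)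
        \<le> (\<integral>\<^sup>+u. ennreal (2 powr \<tau> / PV) * (ennreal (pmf PU u) * ennreal (pmf (W u) v)) \<partial>count_space UNIV)"
      by (intro nn_integral_mono) (use tb pv in \<open>auto simp flip: ennreal_mult intro: ennreal_leI\<close>)
    also have "\<dots> = ennreal (2 powr \<tau> / PV) * (\<integral>\<^sup>+u. ennreal (pmf (W u) v) \<partial>PU)"
      by (simp add: nn_integral_cmult nn_integral_measure_pmf)
    also have "(\<integral>\<^sup>+u. ennreal (pmf (W u) v) \<partial>PU) = ennreal PV"
      unfolding PV_def out_pmf_def by (simp add: ennreal_pmf_bind)
    also have "ennreal (2 powr \<tau> / PV) * ennreal PV = ennreal (2 powr \<tau>)"
      using pv by (simp flip: ennreal_mult)
    finally show ?thesis unfolding ct by (intro enn2real_leI) auto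
  qed
  moreover have "0 \<le> cond_term PU W \<tau> v" unfolding ct by simp
  ultimately show ?thesis by simp
qed

theorem mainTheorem10:
  fixes PU :: "'u::countable pmf" and W :: "'u \<Rightarrow> 'v::countable pmf" and M :: nat and \<tau> :: real
  assumes "M \<ge> 1"
  shows "measure_pmf.expectation (codebook_pmf PU M)
           (\<lambda>c. tv_dist (induced_out W M c) (pmf (out_pmf PU W)))
         \<le> measure_pmf.prob (joint_pmf PU W) (- A_tau PU W \<tau>) + delta' PU W M \<tau>
       \<and> delta' PU W M \<tau> \<le> (1/2) * sqrt (2 powr \<tau> / real M)"
proof -
  define PV where "PV = out_pmf PU W"
  define A where "A = A_tau PU W \<tau>"
  define C where "C = codebook_pmf PU M"
  have Cdef: "C = Pi_pmf {..<M} undefined (\<lambda>_. PU)" unfolding C_def codebook_pmf_def ..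
  define cd where "cd = cond_term PU W \<tau>"
  define a where "a = (\<lambda>v u. pmf (W u) v * indicator A (u,v))"
  define b where "b = (\<lambda>v u. pmf (W u) v * indicator (-A) (u,v))"
  define g where "g = (\<lambda>c v. \<bar>induced_out W M c v - pmf PV v\<bar>)"
  define p where "p = measure_pmf.prob (joint_pmf PU W) (-A)"
  define X where "X = (\<integral>\<^sup>+v. ennreal (sqrt (cd v)) \<partial>PV)"
  have Mpos: "real M > 0" using assms by simp
  have cb: "0 \<le> cd v \<and> cd v \<le> 2 powr \<tau>" for v unfolding cd_def by (rule F5)
  have Xb: "X \<le> ennreal (sqrt (2 powr \<tau>))"
  proof -
    have "X \<le> (\<integral>\<^sup>+v. ennreal (sqrt (2 powr \<tau>)) \<partial>PV)"
      unfolding X_def by (intro nn_integral_mono ennreal_leI real_sqrt_le_mono) (use cb in auto)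
    also have "\<dots> = ennreal (sqrt (2 powr \<tau>))" by (simp add: measure_pmf.emeasure_space_1)
    finally show ?thesis .
  qed
  hence Xfin: "X < top" using ennreal_less_top order.strict_trans1 by blast
  have Ecd: "measure_pmf.expectation PV (\<lambda>v. sqrt (cd v)) = enn2real X"
    unfolding X_def by (subst integral_eq_nn_integral) (auto simp: cb)
  have D: "delta' PU W M \<tau> = 1 / (2 * sqrt (real M)) * enn2real X"
    unfolding delta'_def PV_def[symmetric] cd_def[symmetric] Ecd ..
  have X0: "0 \<le> enn2real X" by simp
  have part2: "delta' PU W M \<tau> \<le> (1/2) * sqrt (2 powr \<tau> / real M)"
  proof -
    have "enn2real X \<le> sqrt (2 powr \<tau>)" using Xb by (intro enn2real_leI) auto
    hence "1 / (2 * sqrt (real M)) * enn2real X \<le> 1 / (2 * sqrt (real M)) * sqrt (2 powr \<tau>)"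
      using Mpos by (intro mult_left_mono) auto
    also have "\<dots> = (1/2) * sqrt (2 powr \<tau> / real M)" by (simp add: real_sqrt_divide)
    finally show ?thesis unfolding D .
  qed
  have core_v: "measure_pmf.expectation C (\<lambda>c. g c v)
      \<le> (1 / sqrt (real M)) * (pmf PV v * sqrt (cd v)) + 2 * measure_pmf.expectation PU (b v)" for v
  proof -
    have geq: "g c v = \<bar>(1/M) * (\<Sum>j<M. a v (c j) + b v (c j))
        - (measure_pmf.expectation PU (a v) + measure_pmf.expectation PU (b v))\<bar>" for c
    proof -
      have "(\<Sum>j<M. a v (c j) + b v (c j)) = (\<Sum>j<M. pmf (W (c j)) v)"
        unfolding a_def b_def by (intro sum.cong) (auto simp: indicator_def)
      thus ?thesis unfolding g_def induced_out_def PV_def a_def b_def using F1[of PU W v A] by simp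
    qed
    have "measure_pmf.expectation C (\<lambda>c. g c v)
        \<le> sqrt (measure_pmf.expectation PU (\<lambda>u. (a v u)^2) / M) + 2 * measure_pmf.expectation PU (b v)"
      unfolding geq Cdef
      by (rule core[OF assms]) (auto simp: a_def b_def indicator_def pmf_le_1)
    also have "measure_pmf.expectation PU (\<lambda>u. (a v u)^2) = (pmf PV v)^2 * cd v"
      unfolding a_def A_def PV_def cd_def by (rule F3)
    also have "sqrt ((pmf PV v)^2 * cd v / M) = (1 / sqrt (real M)) * (pmf PV v * sqrt (cd v))"
      by (simp add: real_sqrt_divide real_sqrt_mult)
    finally show ?thesis .
  qed
  have g0: "0 \<le> g c v" for c v unfolding g_def by simp
  have g2: "g c v \<le> 2" for c v
  proof -
    have "(\<Sum>j<M. pmf (W (c j)) v) \<le> (\<Sum>j<M. 1)" by (rule sum_mono) (rule pmf_le_1)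
    hence "induced_out W M c v \<le> 1" unfolding induced_out_def using Mpos by (simp add: field_simps)
    moreover have "0 \<le> induced_out W M c v" unfolding induced_out_def by (simp add: sum_nonneg)
    ultimately show ?thesis unfolding g_def using pmf_le_1[of PV v] pmf_nonneg[of PV v] by linarith
  qed
  have tv: "tv_dist (induced_out W M c) (pmf PV) = 1/2 * enn2real (\<integral>\<^sup>+v. ennreal (g c v) \<partial>count_space UNIV)" for c
    unfolding tv_dist_def g_def by (subst infsum_nn_conv) auto
  have b0: "0 \<le> measure_pmf.expectation PU (b v)" for v
    unfolding b_def by (rule Bochner_Integration.integral_nonneg) auto
  have "(\<integral>\<^sup>+c. ennreal (tv_dist (induced_out W M c) (pmf PV)) \<partial>C)
      \<le> (\<integral>\<^sup>+c. ennreal (1/2) * (\<integral>\<^sup>+v. ennreal (g c v) \<partial>count_space UNIV) \<partial>C)"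
  proof (rule nn_integral_mono)
    fix c
    show "ennreal (tv_dist (induced_out W M c) (pmf PV)) \<le> ennreal (1/2) * (\<integral>\<^sup>+v. ennreal (g c v) \<partial>count_space UNIV)"
    proof -
      define Y where "Y = (\<integral>\<^sup>+v. ennreal (g c v) \<partial>count_space UNIV)"
      have "ennreal (1/2 * enn2real Y) = ennreal (1/2) * ennreal (enn2real Y)"
        by (rule ennreal_mult) auto
      also have "\<dots> \<le> ennreal (1/2) * Y"
        by (rule mult_left_mono) (auto simp: ennreal_enn2real_if)
      finally show ?thesis unfolding tv Y_def .
    qed
  qed
  also have "\<dots> = ennreal (1/2) * (\<integral>\<^sup>+v. \<integral>\<^sup>+c. ennreal (g c v) \<partial>C \<partial>count_space UNIV)"
    by (simp add: nn_integral_cmult nn_integral_count_space_nn_integral)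
  also have "\<dots> \<le> ennreal (1/2) * (\<integral>\<^sup>+v. ennreal (1 / sqrt (real M)) * ennreal (pmf PV v) * ennreal (sqrt (cd v))
            + 2 * ennreal (measure_pmf.expectation PU (b v)) \<partial>count_space UNIV)"
  proof (intro mult_left_mono nn_integral_mono)
    fix v
    have "(\<integral>\<^sup>+c. ennreal (g c v) \<partial>C) = ennreal (measure_pmf.expectation C (\<lambda>c. g c v))"
      by (rule nn_integral_eq_integral) (auto intro!: bint[where B=2] simp: g0 g2 abs_of_nonneg)
    also have "\<dots> \<le> ennreal ((1 / sqrt (real M)) * (pmf PV v * sqrt (cd v)) + 2 * measure_pmf.expectation PU (b v))"
      by (rule ennreal_leI) (rule core_v)
    also have "\<dots> = ennreal (1 / sqrt (real M)) * ennreal (pmf PV v) * ennreal (sqrt (cd v))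
            + 2 * ennreal (measure_pmf.expectation PU (b v))"
    proof -
      have n1: "0 \<le> (1 / sqrt (real M)) * (pmf PV v * sqrt (cd v))" using cb[of v] by simp
      have "ennreal ((1 / sqrt (real M)) * (pmf PV v * sqrt (cd v)) + 2 * measure_pmf.expectation PU (b v))
         = ennreal ((1 / sqrt (real M)) * (pmf PV v * sqrt (cd v))) + ennreal (2 * measure_pmf.expectation PU (b v))"
        using n1 b0[of v] by (intro ennreal_plus) auto
      also have "ennreal ((1 / sqrt (real M)) * (pmf PV v * sqrt (cd v)))
          = ennreal (1 / sqrt (real M)) * (ennreal (pmf PV v) * ennreal (sqrt (cd v)))"
      proof -
        have "ennreal ((1 / sqrt (real M)) * (pmf PV v * sqrt (cd v)))
            = ennreal (1 / sqrt (real M)) * ennreal (pmf PV v * sqrt (cd v))"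
          by (rule ennreal_mult) (use cb[of v] in auto)
        also have "ennreal (pmf PV v * sqrt (cd v)) = ennreal (pmf PV v) * ennreal (sqrt (cd v))"
          by (rule ennreal_mult) (use cb[of v] in auto)
        finally show ?thesis .
      qed
      also have "ennreal (2 * measure_pmf.expectation PU (b v)) = 2 * ennreal (measure_pmf.expectation PU (b v))"
        using b0[of v] by (simp add: ennreal_mult)
      finally show ?thesis by (simp add: mult.assoc)
    qed
    finally show "(\<integral>\<^sup>+c. ennreal (g c v) \<partial>C) \<le> \<dots>" .
  qed simp
  also have "\<dots> = ennreal (1/2) * (ennreal (1 / sqrt (real M)) * X + 2 * emeasure (measure_pmf (joint_pmf PU W)) (-A))"
  proof -
    have s1: "(\<integral>\<^sup>+v. ennreal (1 / sqrt (real M)) * ennreal (pmf PV v) * ennreal (sqrt (cd v))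
            + 2 * ennreal (measure_pmf.expectation PU (b v)) \<partial>count_space UNIV)
        = (\<integral>\<^sup>+v. ennreal (1 / sqrt (real M)) * (ennreal (pmf PV v) * ennreal (sqrt (cd v))) \<partial>count_space UNIV)
          + (\<integral>\<^sup>+v. 2 * ennreal (measure_pmf.expectation PU (b v)) \<partial>count_space UNIV)"
      by (subst nn_integral_add[symmetric]) (auto simp: mult.assoc)
    have s2: "(\<integral>\<^sup>+v. ennreal (1 / sqrt (real M)) * (ennreal (pmf PV v) * ennreal (sqrt (cd v))) \<partial>count_space UNIV)
        = ennreal (1 / sqrt (real M)) * X"
      unfolding X_def nn_integral_measure_pmf by (rule nn_integral_cmult) auto
    have s3: "(\<integral>\<^sup>+v. 2 * ennreal (measure_pmf.expectation PU (b v)) \<partial>count_space UNIV)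
        = 2 * emeasure (measure_pmf (joint_pmf PU W)) (-A)"
      unfolding b_def F4[symmetric] by (rule nn_integral_cmult) auto
    show ?thesis unfolding s1 s2 s3 ..
  qed
  also have "\<dots> = ennreal (delta' PU W M \<tau> + p)"
  proof -
    define x where "x = enn2real X"
    have Xx: "X = ennreal x" unfolding x_def using Xfin by simp
    have x0: "0 \<le> x" unfolding x_def by simp
    have p0: "0 \<le> p" unfolding p_def by simp
    have em: "emeasure (measure_pmf (joint_pmf PU W)) (-A) = ennreal p"
      unfolding p_def by (simp add: measure_pmf.emeasure_eq_measure)
    have e1: "ennreal (1 / sqrt (real M)) * ennreal x = ennreal (1 / sqrt (real M) * x)"
      by (rule ennreal_mult[symmetric]) (use x0 in auto)
    have e2: "2 * ennreal p = ennreal (2 * p)"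
      using ennreal_mult[of 2 p] p0 by simp
    have e3: "ennreal (1 / sqrt (real M) * x) + ennreal (2 * p) = ennreal (1 / sqrt (real M) * x + 2 * p)"
      by (rule ennreal_plus[symmetric]) (use x0 p0 in auto)
    have e4: "ennreal (1/2) * ennreal (1 / sqrt (real M) * x + 2 * p) = ennreal (1/2 * (1 / sqrt (real M) * x + 2 * p))"
      by (rule ennreal_mult[symmetric]) (use x0 p0 in auto)
    have e5: "1/2 * (1 / sqrt (real M) * x + 2 * p) = delta' PU W M \<tau> + p"
      unfolding D x_def[symmetric] by (simp add: field_simps)
    show ?thesis unfolding Xx em e1 e2 e3 e4 e5 ..
  qed
  finally have le: "(\<integral>\<^sup>+c. ennreal (tv_dist (induced_out W M c) (pmf PV)) \<partial>C) \<le> ennreal (delta' PU W M \<tau> + p)" .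
  have "measure_pmf.expectation C (\<lambda>c. tv_dist (induced_out W M c) (pmf PV))
      = enn2real (\<integral>\<^sup>+c. ennreal (tv_dist (induced_out W M c) (pmf PV)) \<partial>C)"
    by (subst integral_eq_nn_integral) (auto simp: tv)
  also have "\<dots> \<le> delta' PU W M \<tau> + p"
    by (rule enn2real_leI[OF _ le]) (simp add: D p_def X0 Mpos)
  finally show ?thesis using part2 unfolding C_def PV_def p_def A_def by simp
qed

end
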